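(* Consider the system \[ \begin{aligned} \dot S_1 &= (S^{(0)}-S_1)D - y_1\mu_1(S_1)X_1,\\ \dot X_1 &= -D_1X_1 + \mu_1(S_1)X_1,\\ \dot S_2 &= -DS_2 + y_2\mu_1(S_1)X_1 - y_3\mu_2(S_2,S_3)X_2,\\ \dot S_3 &= -DS_3 + y_4\mu_1(S_1)X_1,\\ \dot X_2 &= -D_2X_2 + \mu_2(S_2,S_3)X_2, \end{aligned} \] on the nonnegative orthant of $(S_1,X_1,S_2,S_3,X_2)$-space, under the standing assumptions described in the context. If $\lambda_1\ge S^{(0)}$, then $E=(S^{(0)},0,0,0,0)$ is a globally asymptotically stable equilibrium of this system.
   Context: Parameters: $D>0$, $S^{(0)}>0$, $D_i=D+k_i$ with $k_i\ge 0$ ($i=1,2$), and $y_1,y_2,y_3,y_4>0$. The functions $\mu_1,\mu_2$ satisfy: (H1) $\mu_1\in C^1(\mathbb{R}_+)$ and $\mu_1'(S_1)>0$ for all $S_1>0$; (H2) $\mu_1(0)=0$ and $\mu_1(S_1)>0$ for $S_1>0$; (H3) $\mu_2\in C^1(\mathbb{R}^2_+)$ and $\mu_2(S_2,S_3)>0$ if $S_2>0,S_3>0$; (H4) $\lim_{S_3\to\infty}\mu_2(S_2,S_3)=0$ for all $S_2\ge0$; (H5) $\lim_{S_2\to\infty}\mu_2(S_2,S_3)=0$ for all $S_3\ge0$; (H6) $\mu_2(0,S_3)=0$ for all $S_3\ge0$ and $\mu_2(S_2,0)\ge0$ for $S_2>0$; (H7) there is a continuous $\Gamma:\mathbb{R}_+\to\mathbb{R}$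 with $\partial_{S_2}\mu_2(S_2,S_3)>0$ for $S_2<\Gamma(S_3)$ and $<0$ for $S_2>\Gamma(S_3)$. The break-even concentration $\lambda_1$ is the unique positive extended real number with $\mu_1(\lambda_1)=D_1$; if no such number exists, $\lambda_1=+\infty$. *)

theory Defs
  imports "HOL-Analysis.Analysis"
begin

text \<open>States (S1, X1, S2, S3, X2) of the chemostat model.\<close>
type_synonym state = "real \<times> real \<times> real \<times> real \<times> real"

definition orthant :: "state set" where
  "orthant = {(s1, x1, s2, s3, x2). s1 \<ge> 0 \<and> x1 \<ge> 0 \<and> s2 \<ge> 0 \<and> s3 \<ge> 0 \<and> x2 \<ge> 0}"

definition chemo_field ::
  "real \<Rightarrow> real \<Rightarrow> real \<Rightarrow> real \<Rightarrow> real \<Rightarrow> real \<Rightarrow> real \<Rightarrow> real \<Rightarrow>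
   (real \<Rightarrow> real) \<Rightarrow> (real \<Rightarrow> real \<Rightarrow> real) \<Rightarrow> state \<Rightarrow> state" where
  "chemo_field D S0 D1 D2 y1 y2 y3 y4 mu1 mu2 =
     (\<lambda>(s1, x1, s2, s3, x2).
        ((S0 - s1) * D - y1 * mu1 s1 * x1,
         - D1 * x1 + mu1 s1 * x1,
         - D * s2 + y2 * mu1 s1 * x1 - y3 * mu2 s2 s3 * x2,
         - D * s3 + y4 * mu1 s1 * x1,
         - D2 * x2 + mu2 s2 s3 * x2))"

definition is_solution :: "(state \<Rightarrow> state) \<Rightarrow> (real \<Rightarrow> state) \<Rightarrow> bool" where
  "is_solution F x \<longleftrightarrow>
     (\<forall>t\<ge>0. (x has_vector_derivative F (x t)) (at t within {0..})) \<and>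
     (\<forall>t\<ge>0. x t \<in> orthant)"

definition globally_asymptotically_stable :: "(state \<Rightarrow> state) \<Rightarrow> state \<Rightarrow> bool" where
  "globally_asymptotically_stable F e \<longleftrightarrow>
     e \<in> orthant \<and> F e = 0 \<and>
     (\<forall>\<epsilon>>0. \<exists>\<delta>>0. \<forall>x. is_solution F x \<and> dist (x 0) e < \<delta> \<longrightarrow>
          (\<forall>t\<ge>0. dist (x t) e < \<epsilon>)) \<and>
     (\<forall>x. is_solution F x \<longrightarrow> (x \<longlongrightarrow> e) at_top)"

definition break_even :: "(real \<Rightarrow> real) \<Rightarrow> real \<Rightarrow> ereal" where
  "break_even mu1 D1 =
     (if \<exists>s>0. mu1 s = D1 then ereal (THE s. s > 0 \<and> mu1 s = D1) else \<infinity>)"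

end

theory Submission
  imports Defs
begin

lemma vd_fst:
  assumes "(x has_vector_derivative v) F"
  shows "((\<lambda>t. fst (x t)) has_vector_derivative fst v) F"
  using has_derivative_fst[OF assms[unfolded has_vector_derivative_def]]
  by (simp add: has_vector_derivative_def)

lemma vd_snd:
  assumes "(x has_vector_derivative v) F"
  shows "((\<lambda>t. snd (x t)) has_vector_derivative snd v) F"
  using has_derivative_snd[OF assms[unfolded has_vector_derivative_def]]
  by (simp add: has_vector_derivative_def)

lemma mvt_within:
  fixes f f' :: "real \<Rightarrow> real"
  assumes d: "\<And>t. t \<ge> a \<Longrightarrow> (f has_real_derivative f' t) (at t within {a..})"
    and "a \<le> p" "p < q"
  shows "\<exists>\<xi>. p < \<xi> \<and> \<xi> < q \<and> f q - f p = (q - p) * f' \<xi>"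
proof -
  have "continuous_on {a..} f"
    using d by (meson DERIV_continuous atLeast_iff continuous_on_eq_continuous_within)
  then have c: "continuous_on {p..q} f"
    by (rule continuous_on_subset) (use assms in auto)
  have dd: "(f has_real_derivative f' x) (at x)" if "p < x" for x
  proof -
    have ax: "a \<le> x" using that assms by simp
    have "x \<in> interior {a..}" using that assms by auto
    hence "at x within {a..} = at x" by (rule at_within_interior)
    thus ?thesis using d[OF ax] by simp
  qed
  obtain l z where "p < z" "z < q" "DERIV f z :> l" "f q - f p = (q - p) * l"
    using MVT[OF \<open>p < q\<close> c] dd by (meson real_differentiable_def)
  moreover have "l = f' z" using DERIV_unique[OF \<open>DERIV f z :> l\<close> dd[OF \<open>p < z\<close>]] .
  ultimately show ?thesis by blast
qed

lemma barrier:
  fixes f f' :: "real \<Rightarrow> real"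
  assumes d: "\<And>t. t \<ge> a \<Longrightarrow> (f has_real_derivative f' t) (at t within {a..})"
    and f0: "f a \<le> M" and neg: "\<And>t. t \<ge> a \<Longrightarrow> f t > M \<Longrightarrow> f' t \<le> 0"
    and t: "t \<ge> a"
  shows "f t \<le> M"
proof (rule ccontr)
  assume "\<not> f t \<le> M"
  hence ft: "f t > M" by simp
  have "continuous_on {a..} f"
    using d by (meson DERIV_continuous atLeast_iff continuous_on_eq_continuous_within)
  then have c: "continuous_on {a..t} f"
    by (rule continuous_on_subset) auto
  let ?S = "{s \<in> {a..t}. f s \<le> M}"
  have cl: "closed ?S"
    using continuous_on_closed_Collect_le[OF c continuous_on_const closed_atLeastAtMost] by simp
  have ne: "?S \<noteq> {}" using f0 t by auto
  have bd: "bdd_above ?S" by (auto intro: bdd_aboveI[of _ t])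
  define t0 where "t0 = Sup ?S"
  have t0S: "t0 \<in> ?S" unfolding t0_def using closed_contains_Sup[OF ne bd cl] .
  have above: "f s > M" if "t0 < s" "s \<le> t" for s
  proof (rule ccontr)
    assume "\<not> f s > M"
    hence "s \<in> ?S" using that t0S by auto
    hence "s \<le> t0" unfolding t0_def using bd by (simp add: cSup_upper)
    thus False using that by simp
  qed
  have "t0 < t" using t0S ft by (metis (no_types, lifting) atLeastAtMost_iff mem_Collect_eq order_le_less not_le)
  then obtain \<xi> where x: "t0 < \<xi>" "\<xi> < t" "f t - f t0 = (t - t0) * f' \<xi>"
    using mvt_within[OF d, of t0 t] t0S by auto
  have "f' \<xi> \<le> 0" using neg[of \<xi>] above[of \<xi>] x t0S by auto
  hence "(t - t0) * f' \<xi> \<le> 0" using \<open>t0 < t\<close> by (simp add: mult_nonneg_nonpos)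
  hence "f t \<le> f t0" using x by linarith
  thus False using t0S ft by auto
qed

lemma eventual:
  fixes f f' :: "real \<Rightarrow> real"
  assumes d: "\<And>t. t \<ge> a \<Longrightarrow> (f has_real_derivative f' t) (at t within {a..})"
    and c: "c > 0" and neg: "\<And>t. t \<ge> a \<Longrightarrow> f t \<ge> \<epsilon> \<Longrightarrow> f' t \<le> - c"
  shows "\<exists>T\<ge>a. \<forall>t\<ge>T. f t \<le> \<epsilon>"
proof -
  have "\<exists>T\<ge>a. f T \<le> \<epsilon>"
  proof (rule ccontr)
    assume "\<not> ?thesis"
    hence gt: "\<And>t. t \<ge> a \<Longrightarrow> f t > \<epsilon>" by auto
    define t where "t = a + \<bar>f a - \<epsilon>\<bar> / c + 1"
    have "0 \<le> \<bar>f a - \<epsilon>\<bar> / c" using c by simp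
    hence "a < t" by (simp add: t_def)
    then obtain \<xi> where x: "a < \<xi>" "\<xi> < t" "f t - f a = (t - a) * f' \<xi>"
      using mvt_within[OF d, of a t] by auto
    have "f' \<xi> \<le> - c" using neg[of \<xi>] gt[of \<xi>] x by auto
    hence "(t - a) * f' \<xi> \<le> (t - a) * (- c)" using \<open>a < t\<close> mult_left_mono[of "f' \<xi>" "-c" "t-a"] by linarith
    also have "(t - a) * (- c) = - \<bar>f a - \<epsilon>\<bar> - c" using c by (simp add: t_def field_simps)
    finally have "f t < \<epsilon>" using x c by linarith
    thus False using gt[of t] \<open>a < t\<close> by simp
  qed
  then obtain T where T: "T \<ge> a" "f T \<le> \<epsilon>" by auto
  have "\<forall>t\<ge>T. f t \<le> \<epsilon>"
  proof (intro allI impI)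
    fix t assume "t \<ge> T"
    show "f t \<le> \<epsilon>"
    proof (rule barrier[of T f f' \<epsilon> t])
      fix s assume "s \<ge> T"
      thus "(f has_real_derivative f' s) (at s within {T..})"
        using d[of s] T by (auto intro: DERIV_subset)
    next
      fix s assume "s \<ge> T" "f s > \<epsilon>"
      thus "f' s \<le> 0" using neg[of s] T c by auto
    qed (use T \<open>t \<ge> T\<close> in auto)
  qed
  thus ?thesis using T by auto
qed


lemma deriv_eq: "(f has_field_derivative a) F \<Longrightarrow> a = b \<Longrightarrow> (f has_field_derivative b) F"
  by simp

lemma lin_decay:
  fixes f f' h :: "real \<Rightarrow> real"
  assumes d: "\<And>t. t \<ge> 0 \<Longrightarrow> (f has_real_derivative f' t) (at t within {0..})"
    and D: "D > 0" and le: "\<And>t. t \<ge> 0 \<Longrightarrow> f' t \<le> - D * f t + h t"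
    and h: "\<And>\<eta>. \<eta> > 0 \<Longrightarrow> \<exists>T. \<forall>t\<ge>T. h t \<le> \<eta>"
    and e: "\<epsilon> > 0"
  shows "\<exists>T\<ge>0. \<forall>t\<ge>T. f t \<le> \<epsilon>"
proof -
  obtain T1 where T1: "\<And>t. t \<ge> T1 \<Longrightarrow> h t \<le> D * \<epsilon> / 2"
    using h[of "D * \<epsilon> / 2"] D e by auto
  define a where "a = max T1 0"
  have "\<exists>T\<ge>a. \<forall>t\<ge>T. f t \<le> \<epsilon>"
  proof (rule eventual[of a f f' "D * \<epsilon> / 2"])
    fix t assume "t \<ge> a"
    thus "(f has_real_derivative f' t) (at t within {a..})"
      using d[of t] by (auto simp: a_def intro: DERIV_subset)
  next
    show "D * \<epsilon> / 2 > 0" using D e by simp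
  next
    fix t assume t: "t \<ge> a" "f t \<ge> \<epsilon>"
    have "D * \<epsilon> \<le> D * f t" using t D by (simp add: mult_left_mono)
    thus "f' t \<le> - (D * \<epsilon> / 2)" using le[of t] T1[of t] t by (auto simp: a_def)
  qed
  thus ?thesis by (auto simp: a_def)
qed

lemma tend_of:
  fixes g :: "real \<Rightarrow> real"
  assumes "\<And>\<epsilon>. \<epsilon> > 0 \<Longrightarrow> \<exists>T. \<forall>t\<ge>T. \<bar>g t - L\<bar> \<le> \<epsilon>"
  shows "(g \<longlongrightarrow> L) at_top"
proof (rule tendstoI)
  fix e :: real assume "e > 0"
  then obtain T where "\<forall>t\<ge>T. \<bar>g t - L\<bar> \<le> e / 2" using assms[of "e/2"] by auto
  thus "eventually (\<lambda>t. dist (g t) L < e) at_top"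
    unfolding eventually_at_top_linorder dist_real_def using \<open>e > 0\<close>
    by (metis field_sum_of_halves half_gt_zero less_add_same_cancel1 order_le_less_trans)
qed

lemma tend_nn0:
  fixes g :: "real \<Rightarrow> real"
  assumes a: "\<And>t. t \<ge> 0 \<Longrightarrow> g t \<ge> 0" "\<And>\<epsilon>. \<epsilon> > 0 \<Longrightarrow> \<exists>T\<ge>0. \<forall>t\<ge>T. g t \<le> \<epsilon>"
  shows "(g \<longlongrightarrow> 0) at_top"
proof (rule tend_of)
  fix \<epsilon> :: real assume "\<epsilon> > 0"
  then obtain T where "T \<ge> 0" "\<forall>t\<ge>T. g t \<le> \<epsilon>" using a(2) by blast
  thus "\<exists>T. \<forall>t\<ge>T. \<bar>g t - 0\<bar> \<le> \<epsilon>" using a(1) by force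
qed

locale chemo =
  fixes D S0 k1 k2 D1 D2 y1 y2 y3 y4 :: real
    and mu1 :: "real \<Rightarrow> real" and mu2 :: "real \<Rightarrow> real \<Rightarrow> real"
  assumes D: "D > 0" and S0: "S0 > 0" and k1: "k1 \<ge> 0" and k2: "k2 \<ge> 0"
    and D1: "D1 = D + k1" and D2: "D2 = D + k2"
    and y1: "y1 > 0" and y2: "y2 > 0" and y3: "y3 > 0" and y4: "y4 > 0"
    and mono1: "\<And>a b. 0 \<le> a \<Longrightarrow> a < b \<Longrightarrow> mu1 a < mu1 b"
    and mu10: "mu1 0 = 0"
    and muS0: "mu1 S0 \<le> D1"
    and mu2nn: "\<And>a b. 0 \<le> a \<Longrightarrow> 0 \<le> b \<Longrightarrow> 0 \<le> mu2 a b"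
    and mu2small: "\<And>e. e > 0 \<Longrightarrow> \<exists>\<rho>>0. \<forall>a b. 0 \<le> a \<longrightarrow> a \<le> \<rho> \<longrightarrow> 0 \<le> b \<longrightarrow> b \<le> \<rho> \<longrightarrow> mu2 a b < e"
begin

lemma mu1_le: "0 \<le> a \<Longrightarrow> a \<le> b \<Longrightarrow> mu1 a \<le> mu1 b"
  using mono1[of a b] by (cases "a = b") auto

lemma mu1_nn: "0 \<le> a \<Longrightarrow> 0 \<le> mu1 a"
  using mu1_le[of 0 a] mu10 by simp

definition "K1 = (1 + y1) / y1"
definition "Bc = mu1 (S0 + 1 + y1)"
definition "Kc = 1 + y1 + K1 + y1 * k1 * K1 / D + y1 * K1 + y4 * Bc * K1 / D + y2 * Bc * K1 / D"

lemma K1_ge: "K1 \<ge> 1" using y1 by (simp add: K1_def)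
lemma Bc_nn: "Bc \<ge> 0" using S0 y1 by (simp add: Bc_def mu1_nn)
lemma Kc_pos: "Kc \<ge> 1"
proof -
  have "0 \<le> y1 * k1 * K1 / D" "0 \<le> y1 * K1" "0 \<le> y4 * Bc * K1 / D" "0 \<le> y2 * Bc * K1 / D"
    using y1 y2 y4 k1 K1_ge Bc_nn D by auto
  thus ?thesis using y1 K1_ge unfolding Kc_def by linarith
qed

end

locale traj = chemo +
  fixes s1 x1 s2 s3 x2 :: "real \<Rightarrow> real"
  assumes ds1: "\<And>t. t \<ge> 0 \<Longrightarrow> (s1 has_real_derivative ((S0 - s1 t) * D - y1 * mu1 (s1 t) * x1 t)) (at t within {0..})"
    and dx1: "\<And>t. t \<ge> 0 \<Longrightarrow> (x1 has_real_derivative (- D1 * x1 t + mu1 (s1 t) * x1 t)) (at t within {0..})"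
    and ds2: "\<And>t. t \<ge> 0 \<Longrightarrow> (s2 has_real_derivative (- D * s2 t + y2 * mu1 (s1 t) * x1 t - y3 * mu2 (s2 t) (s3 t) * x2 t)) (at t within {0..})"
    and ds3: "\<And>t. t \<ge> 0 \<Longrightarrow> (s3 has_real_derivative (- D * s3 t + y4 * mu1 (s1 t) * x1 t)) (at t within {0..})"
    and dx2: "\<And>t. t \<ge> 0 \<Longrightarrow> (x2 has_real_derivative (- D2 * x2 t + mu2 (s2 t) (s3 t) * x2 t)) (at t within {0..})"
    and nn: "\<And>t. t \<ge> 0 \<Longrightarrow> s1 t \<ge> 0 \<and> x1 t \<ge> 0 \<and> s2 t \<ge> 0 \<and> s3 t \<ge> 0 \<and> x2 t \<ge> 0"
begin

lemma dz:
  assumes t: "t \<ge> 0"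
  shows "((\<lambda>t. s1 t + y1 * x1 t - S0) has_real_derivative
   (- D * (s1 t + y1 * x1 t - S0) - y1 * k1 * x1 t)) (at t within {0..})"
proof -
  have "((\<lambda>t. s1 t + y1 * x1 t - S0) has_real_derivative
     ((S0 - s1 t) * D - y1 * mu1 (s1 t) * x1 t + y1 * (- D1 * x1 t + mu1 (s1 t) * x1 t) - 0)) (at t within {0..})"
    by (intro DERIV_diff DERIV_add DERIV_cmult ds1[OF t] dx1[OF t] DERIV_const)
  thus ?thesis by (rule deriv_eq) (simp add: D1 algebra_simps)
qed

lemma dz':
  assumes t: "t \<ge> 0"
  shows "((\<lambda>t. S0 - (s1 t + y1 * x1 t)) has_real_derivative
   (- D * (S0 - (s1 t + y1 * x1 t)) + y1 * k1 * x1 t)) (at t within {0..})"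
proof -
  have "((\<lambda>t. S0 - (s1 t + y1 * x1 t)) has_real_derivative
     (0 - ((S0 - s1 t) * D - y1 * mu1 (s1 t) * x1 t + y1 * (- D1 * x1 t + mu1 (s1 t) * x1 t)))) (at t within {0..})"
    by (intro DERIV_diff DERIV_add DERIV_cmult ds1[OF t] dx1[OF t] DERIV_const)
  thus ?thesis by (rule deriv_eq) (simp add: D1 algebra_simps)
qed

definition "u0 = max 0 (s1 0 + y1 * x1 0 - S0)"
definition "Mx = max (x1 0) (u0 / y1)"
definition "B0 = mu1 (S0 + u0)"

lemma y1k1x1: "t \<ge> 0 \<Longrightarrow> 0 \<le> y1 * k1 * x1 t"
  using y1 k1 nn[of t] by simp

lemma z_up:
  assumes "t \<ge> 0"
  shows "s1 t + y1 * x1 t - S0 \<le> u0"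
proof (rule barrier[OF dz])
  fix t :: real assume t: "t \<ge> 0" "u0 < s1 t + y1 * x1 t - S0"
  have "0 \<le> u0" by (simp add: u0_def)
  hence "0 < D * (s1 t + y1 * x1 t - S0)" using t D by simp
  thus "- D * (s1 t + y1 * x1 t - S0) - y1 * k1 * x1 t \<le> 0" using y1k1x1[of t] t by simp
qed (use assms in \<open>auto simp: u0_def\<close>)

lemma x1_bound:
  assumes "t \<ge> 0"
  shows "x1 t \<le> Mx"
proof (rule barrier[OF dx1])
  fix t :: real assume t: "t \<ge> 0" "Mx < x1 t"
  have "u0 / y1 \<le> Mx" by (simp add: Mx_def)
  hence "u0 \<le> y1 * Mx" using y1 by (simp add: field_simps)
  also have "\<dots> < y1 * x1 t" using t y1 by simp
  finally have "s1 t < S0" using z_up[of t] t by simp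
  hence "mu1 (s1 t) < mu1 S0" using mono1 nn[of t] t by simp
  hence "mu1 (s1 t) - D1 \<le> 0" using muS0 by simp
  hence "(mu1 (s1 t) - D1) * x1 t \<le> 0" using nn[of t] t by (simp add: mult_nonpos_nonneg)
  thus "- D1 * x1 t + mu1 (s1 t) * x1 t \<le> 0" by (simp add: algebra_simps)
qed (use assms in \<open>auto simp: Mx_def\<close>)

lemma s1_up: "t \<ge> 0 \<Longrightarrow> s1 t \<le> S0 + u0"
  using z_up[of t] nn[of t] y1 by (smt (verit) mult_nonneg_nonneg)

lemma mu1_bound: "t \<ge> 0 \<Longrightarrow> mu1 (s1 t) \<le> B0 \<and> 0 \<le> mu1 (s1 t)"
  using mu1_le[of "s1 t" "S0 + u0"] s1_up[of t] nn[of t] mu1_nn by (simp add: B0_def)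

lemma Mx_nn: "0 \<le> Mx" using nn[of 0] by (simp add: Mx_def le_max_iff_disj)
lemma B0_nn: "0 \<le> B0" using mu1_bound[of 0] by simp

lemma z_low:
  assumes "t \<ge> 0"
  shows "S0 - (s1 t + y1 * x1 t) \<le> max (S0 - (s1 0 + y1 * x1 0)) (y1 * k1 * Mx / D)"
proof (rule barrier[OF dz'])
  fix t :: real assume t: "t \<ge> 0" "max (S0 - (s1 0 + y1 * x1 0)) (y1 * k1 * Mx / D) < S0 - (s1 t + y1 * x1 t)"
  have "y1 * k1 * x1 t \<le> y1 * k1 * Mx" using x1_bound[of t] t y1 k1 by (simp add: mult_left_mono)
  also have "\<dots> < D * (S0 - (s1 t + y1 * x1 t))"
  proof -
    have "y1 * k1 * Mx / D < S0 - (s1 t + y1 * x1 t)" using t by simp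
    thus ?thesis using D by (simp add: pos_divide_less_eq mult.commute)
  qed
  finally show "- D * (S0 - (s1 t + y1 * x1 t)) + y1 * k1 * x1 t \<le> 0" by simp
qed (use assms in auto)

lemma prod_bound: "t \<ge> 0 \<Longrightarrow> mu1 (s1 t) * x1 t \<le> B0 * Mx"
  using mu1_bound[of t] x1_bound[of t] nn[of t] by (simp add: mult_mono B0_nn)

lemma s3_bound:
  assumes "t \<ge> 0"
  shows "s3 t \<le> max (s3 0) (y4 * B0 * Mx / D)"
proof (rule barrier[OF ds3])
  fix t :: real assume t: "t \<ge> 0" "max (s3 0) (y4 * B0 * Mx / D) < s3 t"
  have "y4 * (mu1 (s1 t) * x1 t) \<le> y4 * (B0 * Mx)" using prod_bound[of t] t y4 by (simp add: mult_left_mono)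
  also have "\<dots> < D * s3 t"
  proof -
    have "y4 * B0 * Mx / D < s3 t" using t by simp
    hence "y4 * B0 * Mx < s3 t * D" using D by (simp add: pos_divide_less_eq)
    moreover have "y4 * (B0 * Mx) = y4 * B0 * Mx" by (simp add: mult.assoc)
    moreover have "D * s3 t = s3 t * D" by simp
    ultimately show ?thesis by linarith
  qed
  finally show "- D * s3 t + y4 * mu1 (s1 t) * x1 t \<le> 0" by (simp add: algebra_simps)
qed (use assms in auto)

lemma s2_bound:
  assumes "t \<ge> 0"
  shows "s2 t \<le> max (s2 0) (y2 * B0 * Mx / D)"
proof (rule barrier[OF ds2])
  fix t :: real assume t: "t \<ge> 0" "max (s2 0) (y2 * B0 * Mx / D) < s2 t"
  have "y2 * (mu1 (s1 t) * x1 t) \<le> y2 * (B0 * Mx)" using prod_bound[of t] t y2 by (simp add: mult_left_mono)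
  also have "\<dots> < D * s2 t"
  proof -
    have "y2 * B0 * Mx / D < s2 t" using t by simp
    hence "y2 * B0 * Mx < s2 t * D" using D by (simp add: pos_divide_less_eq)
    moreover have "y2 * (B0 * Mx) = y2 * B0 * Mx" by (simp add: mult.assoc)
    moreover have "D * s2 t = s2 t * D" by simp
    ultimately show ?thesis by linarith
  qed
  finally have 1: "y2 * (mu1 (s1 t) * x1 t) < D * s2 t" .
  have "0 \<le> y3 * mu2 (s2 t) (s3 t) * x2 t" using y3 mu2nn[of "s2 t" "s3 t"] nn[of t] t by simp
  thus "- D * s2 t + y2 * mu1 (s1 t) * x1 t - y3 * mu2 (s2 t) (s3 t) * x2 t \<le> 0"
    using 1 by (simp add: algebra_simps)
qed (use assms in auto)

lemma x2_bound:
  assumes "\<And>t. t \<ge> 0 \<Longrightarrow> mu2 (s2 t) (s3 t) \<le> D2" "t \<ge> 0"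
  shows "x2 t \<le> x2 0"
proof (rule barrier[OF dx2])
  fix t :: real assume t: "t \<ge> 0" "x2 0 < x2 t"
  have "(mu2 (s2 t) (s3 t) - D2) * x2 t \<le> 0" using assms(1)[of t] nn[of t] t by (simp add: mult_nonpos_nonneg)
  thus "- D2 * x2 t + mu2 (s2 t) (s3 t) * x2 t \<le> 0" by (simp add: algebra_simps)
qed (use assms in auto)


lemma z_up_ev:
  assumes e: "\<epsilon> > 0"
  shows "\<exists>T\<ge>0. \<forall>t\<ge>T. s1 t + y1 * x1 t - S0 \<le> \<epsilon>"
proof (rule lin_decay[of "\<lambda>t. s1 t + y1 * x1 t - S0" "\<lambda>t. - D * (s1 t + y1 * x1 t - S0) - y1 * k1 * x1 t" D "\<lambda>t. 0" \<epsilon>])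
  fix t :: real assume "t \<ge> 0"
  thus "((\<lambda>t. s1 t + y1 * x1 t - S0) has_real_derivative - D * (s1 t + y1 * x1 t - S0) - y1 * k1 * x1 t) (at t within {0..})"
    by (rule dz)
  show "- D * (s1 t + y1 * x1 t - S0) - y1 * k1 * x1 t \<le> - D * (s1 t + y1 * x1 t - S0) + 0"
    using y1k1x1[OF \<open>t \<ge> 0\<close>] by linarith
next
  fix \<eta> :: real assume "\<eta> > 0"
  thus "\<exists>T. \<forall>t\<ge>T. (0::real) \<le> \<eta>" by simp
qed (use D e in auto)

lemma x1_ev:
  assumes e: "\<epsilon> > 0"
  shows "\<exists>T\<ge>0. \<forall>t\<ge>T. x1 t \<le> \<epsilon>"
proof -
  define \<eta> where "\<eta> = min \<epsilon> (S0 / y1)"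
  have eta1: "\<eta> > 0" using e S0 y1 by (simp add: \<eta>_def)
  have eta2: "\<eta> \<le> \<epsilon>" by (simp add: \<eta>_def)
  have "\<eta> \<le> S0 / y1" by (simp add: \<eta>_def)
  hence eta3: "y1 * \<eta> \<le> S0" using y1 by (simp add: field_simps)
  note eta = eta1 eta2 eta3
  obtain T1 where T1: "T1 \<ge> 0" "\<And>t. t \<ge> T1 \<Longrightarrow> s1 t + y1 * x1 t - S0 \<le> y1 * \<eta> / 2"
    using z_up_ev[of "y1 * \<eta> / 2"] eta y1 by auto
  define c where "c = (mu1 S0 - mu1 (S0 - y1 * \<eta> / 2)) * \<eta>"
  have "mu1 (S0 - y1 * \<eta> / 2) < mu1 S0" using mono1[of "S0 - y1 * \<eta> / 2" S0] eta y1 by simp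
  hence c: "c > 0" using eta by (simp add: c_def)
  have "\<exists>T\<ge>T1. \<forall>t\<ge>T. x1 t \<le> \<eta>"
  proof (rule eventual[of T1 x1 "\<lambda>t. - D1 * x1 t + mu1 (s1 t) * x1 t" c])
    fix t assume "t \<ge> T1"
    thus "(x1 has_real_derivative - D1 * x1 t + mu1 (s1 t) * x1 t) (at t within {T1..})"
    proof -
      have t0: "t \<ge> 0" using T1 \<open>t \<ge> T1\<close> by linarith
      show ?thesis by (rule DERIV_subset[OF dx1[OF t0]]) (use T1 in auto)
    qed
  next
    show "c > 0" by (rule c)
  next
    fix t assume t: "t \<ge> T1" "\<eta> \<le> x1 t"
    have "s1 t \<le> S0 - y1 * \<eta> / 2"
      using T1(2)[OF t(1)] t(2) y1 mult_left_mono[OF t(2), of y1] by linarith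
    moreover have t0: "t \<ge> 0" using t T1(1) by linarith
    ultimately have m: "mu1 (s1 t) \<le> mu1 (S0 - y1 * \<eta> / 2)" using mu1_le[of "s1 t" "S0 - y1 * \<eta> / 2"] nn[OF t0] by simp
    have "- D1 * x1 t + mu1 (s1 t) * x1 t = (mu1 (s1 t) - D1) * x1 t" by (simp add: algebra_simps)
    also have "\<dots> \<le> (mu1 (S0 - y1 * \<eta> / 2) - mu1 S0) * x1 t"
      using m muS0 nn[OF t0] by (intro mult_right_mono) auto
    also have "\<dots> \<le> (mu1 (S0 - y1 * \<eta> / 2) - mu1 S0) * \<eta>"
      using \<open>mu1 (S0 - y1 * \<eta> / 2) < mu1 S0\<close> t by (intro mult_left_mono_neg) auto
    finally show "- D1 * x1 t + mu1 (s1 t) * x1 t \<le> - c" by (simp add: c_def algebra_simps)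
  qed
  then obtain T where "T \<ge> T1" "\<forall>t\<ge>T. x1 t \<le> \<eta>" by blast
  thus ?thesis using T1(1) eta2 by (intro exI[of _ T]) force
qed

lemma prod_ev:
  assumes e: "\<eta> > 0"
  shows "\<exists>T. \<forall>t\<ge>T. y4 * (mu1 (s1 t) * x1 t) \<le> \<eta>"
proof -
  obtain T where T: "T \<ge> 0" "\<And>t. t \<ge> T \<Longrightarrow> x1 t \<le> \<eta> / (y4 * (B0 + 1))"
    using x1_ev[of "\<eta> / (y4 * (B0 + 1))"] e y4 B0_nn by auto
  have "y4 * (mu1 (s1 t) * x1 t) \<le> \<eta>" if t: "t \<ge> T" for t
  proof -
    have "mu1 (s1 t) * x1 t \<le> (B0 + 1) * (\<eta> / (y4 * (B0 + 1)))"
      using mu1_bound[of t] T(2)[OF t] nn[of t] t T(1) by (intro mult_mono) auto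
    also have "\<dots> = \<eta> / y4"
    proof -
      have "B0 + 1 > 0" using B0_nn by simp
      thus ?thesis using y4 by simp
    qed
    finally show ?thesis using y4 by (simp add: field_simps)
  qed
  thus ?thesis by auto
qed

lemma prod_ev2:
  assumes e: "\<eta> > 0"
  shows "\<exists>T. \<forall>t\<ge>T. y2 * (mu1 (s1 t) * x1 t) \<le> \<eta>"
proof -
  obtain T where T: "\<And>t. t \<ge> T \<Longrightarrow> y4 * (mu1 (s1 t) * x1 t) \<le> \<eta> * y4 / y2"
    using prod_ev[of "\<eta> * y4 / y2"] e y2 y4 by auto
  have "y2 * (mu1 (s1 t) * x1 t) \<le> \<eta>" if "t \<ge> T" for t
    using T[OF that] y2 y4 by (simp add: field_simps)
  thus ?thesis by auto
qed

lemma s3_ev: "\<epsilon> > 0 \<Longrightarrow> \<exists>T\<ge>0. \<forall>t\<ge>T. s3 t \<le> \<epsilon>"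
  by (rule lin_decay[OF ds3 D, where h="\<lambda>t. y4 * (mu1 (s1 t) * x1 t)"]) (use prod_ev in auto)

lemma s2_ev: "\<epsilon> > 0 \<Longrightarrow> \<exists>T\<ge>0. \<forall>t\<ge>T. s2 t \<le> \<epsilon>"
proof (rule lin_decay[OF ds2 D, where h="\<lambda>t. y2 * (mu1 (s1 t) * x1 t)"])
  fix t :: real assume t: "t \<ge> 0"
  have "0 \<le> y3 * mu2 (s2 t) (s3 t) * x2 t" using y3 mu2nn[of "s2 t" "s3 t"] nn[of t] t by simp
  thus "- D * s2 t + y2 * mu1 (s1 t) * x1 t - y3 * mu2 (s2 t) (s3 t) * x2 t \<le> - D * s2 t + y2 * (mu1 (s1 t) * x1 t)"
    by (simp add: algebra_simps)
qed (use prod_ev2 in auto)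

lemma zlow_ev: "\<epsilon> > 0 \<Longrightarrow> \<exists>T\<ge>0. \<forall>t\<ge>T. S0 - (s1 t + y1 * x1 t) \<le> \<epsilon>"
proof (rule lin_decay[OF dz' D, where h="\<lambda>t. y1 * k1 * x1 t"])
  fix \<eta> :: real assume "\<eta> > 0"
  show "\<exists>T. \<forall>t\<ge>T. y1 * k1 * x1 t \<le> \<eta>"
  proof -
    obtain T where T: "T \<ge> 0" "\<And>t. t \<ge> T \<Longrightarrow> x1 t \<le> \<eta> / (y1 * (k1 + 1))"
      using x1_ev[of "\<eta> / (y1 * (k1 + 1))"] \<open>\<eta> > 0\<close> y1 k1 by auto
    have "y1 * k1 * x1 t \<le> \<eta>" if t: "t \<ge> T" for t
    proof -
      have "y1 * k1 * x1 t \<le> y1 * (k1 + 1) * x1 t" using y1 nn[of t] t T by (intro mult_right_mono) auto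
      also have "\<dots> \<le> y1 * (k1 + 1) * (\<eta> / (y1 * (k1 + 1)))" using T(2)[OF t] y1 k1 by (intro mult_left_mono) auto
      also have "\<dots> = \<eta>" using y1 k1 by simp
      finally show ?thesis .
    qed
    thus ?thesis by auto
  qed
qed auto

lemma x2_ev:
  assumes e: "\<epsilon> > 0"
  shows "\<exists>T\<ge>0. \<forall>t\<ge>T. x2 t \<le> \<epsilon>"
proof -
  have D2p: "D2 > 0" using D k2 D2 by simp
  obtain \<rho> where \<rho>: "\<rho> > 0" "\<And>a b. 0 \<le> a \<Longrightarrow> a \<le> \<rho> \<Longrightarrow> 0 \<le> b \<Longrightarrow> b \<le> \<rho> \<Longrightarrow> mu2 a b < D2 / 2"
    using mu2small[of "D2 / 2"] D2p by auto
  obtain T2 where T2: "T2 \<ge> 0" "\<And>t. t \<ge> T2 \<Longrightarrow> s2 t \<le> \<rho>" using s2_ev[OF \<rho>(1)] by auto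
  obtain T3 where T3: "T3 \<ge> 0" "\<And>t. t \<ge> T3 \<Longrightarrow> s3 t \<le> \<rho>" using s3_ev[OF \<rho>(1)] by auto
  define a where "a = max T2 T3"
  have "\<exists>T\<ge>a. \<forall>t\<ge>T. x2 t \<le> \<epsilon>"
  proof (rule eventual[of a x2 "\<lambda>t. - D2 * x2 t + mu2 (s2 t) (s3 t) * x2 t" "D2 / 2 * \<epsilon>"])
    fix t assume "t \<ge> a"
    thus "(x2 has_real_derivative - D2 * x2 t + mu2 (s2 t) (s3 t) * x2 t) (at t within {a..})"
    proof -
      have t0: "t \<ge> 0" using T2 \<open>t \<ge> a\<close> by (simp add: a_def)
      show ?thesis by (rule DERIV_subset[OF dx2[OF t0]]) (use T2 T3 in \<open>auto simp: a_def\<close>)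
    qed
  next
    show "D2 / 2 * \<epsilon> > 0" using D2p e by simp
  next
    fix t assume t: "t \<ge> a" "\<epsilon> \<le> x2 t"
    have t0: "t \<ge> 0" using t T2 by (auto simp: a_def)
    have m: "mu2 (s2 t) (s3 t) < D2 / 2" using \<rho>(2) T2(2)[of t] T3(2)[of t] nn[OF t0] t by (auto simp: a_def)
    have "- D2 * x2 t + mu2 (s2 t) (s3 t) * x2 t = (mu2 (s2 t) (s3 t) - D2) * x2 t" by (simp add: algebra_simps)
    also have "\<dots> \<le> (- D2 / 2) * x2 t" using m nn[OF t0] by (intro mult_right_mono) auto
    also have "\<dots> \<le> (- D2 / 2) * \<epsilon>" using t D2p by (intro mult_left_mono_neg) auto
    finally show "- D2 * x2 t + mu2 (s2 t) (s3 t) * x2 t \<le> - (D2 / 2 * \<epsilon>)" by simp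
  qed
  then obtain T where "T \<ge> a" "\<forall>t\<ge>T. x2 t \<le> \<epsilon>" by blast
  moreover have "T \<ge> 0" using \<open>T \<ge> a\<close> T2(1) by (simp add: a_def)
  ultimately show ?thesis by blast
qed

lemma converges: "((\<lambda>t. (s1 t, x1 t, s2 t, s3 t, x2 t)) \<longlongrightarrow> (S0, 0, 0, 0, 0)) at_top"
proof -
  note nn0 = tend_nn0
  have l1: "(s1 \<longlongrightarrow> S0) at_top"
  proof (rule tend_of)
    fix \<epsilon> :: real assume e: "\<epsilon> > 0"
    obtain Ta where Ta: "Ta \<ge> 0" "\<forall>t\<ge>Ta. s1 t + y1 * x1 t - S0 \<le> \<epsilon>" using z_up_ev[OF e] by auto
    obtain Tb where Tb: "Tb \<ge> 0" "\<forall>t\<ge>Tb. S0 - (s1 t + y1 * x1 t) \<le> \<epsilon> / 2" using zlow_ev[of "\<epsilon>/2"] e by auto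
    obtain Tc where Tc: "Tc \<ge> 0" "\<forall>t\<ge>Tc. x1 t \<le> \<epsilon> / (2 * y1)" using x1_ev[of "\<epsilon>/(2*y1)"] e y1 by auto
    have "\<bar>s1 t - S0\<bar> \<le> \<epsilon>" if t: "t \<ge> max Ta (max Tb Tc)" for t
    proof -
      have x: "0 \<le> x1 t" "y1 * x1 t \<le> \<epsilon> / 2"
        using nn[of t] Tc t y1 by (auto simp: field_simps)
      have "0 \<le> y1 * x1 t" using x y1 by simp
      moreover have "s1 t + y1 * x1 t - S0 \<le> \<epsilon>" using Ta(2) t by simp
      moreover have "S0 - (s1 t + y1 * x1 t) \<le> \<epsilon> / 2" using Tb(2) t by simp
      ultimately show ?thesis using x by linarith
    qed
    thus "\<exists>T. \<forall>t\<ge>T. \<bar>s1 t - S0\<bar> \<le> \<epsilon>" by blast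
  qed
  have l2: "(x1 \<longlongrightarrow> 0) at_top" by (rule nn0) (use nn x1_ev in auto)
  have l3: "(s2 \<longlongrightarrow> 0) at_top" by (rule nn0) (use nn s2_ev in auto)
  have l4: "(s3 \<longlongrightarrow> 0) at_top" by (rule nn0) (use nn s3_ev in auto)
  have l5: "(x2 \<longlongrightarrow> 0) at_top" by (rule nn0) (use nn x2_ev in auto)
  show ?thesis by (intro tendsto_Pair l1 l2 l3 l4 l5)
qed


lemma stable_traj:
  assumes dl: "0 < \<delta>" "\<delta> \<le> 1"
    and i: "\<bar>s1 0 - S0\<bar> < \<delta>" "x1 0 < \<delta>" "s2 0 < \<delta>" "s3 0 < \<delta>" "x2 0 < \<delta>"
    and rho: "\<And>a b. 0 \<le> a \<Longrightarrow> a \<le> \<rho> \<Longrightarrow> 0 \<le> b \<Longrightarrow> b \<le> \<rho> \<Longrightarrow> mu2 a b < D2"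
    and Kr: "Kc * \<delta> \<le> \<rho>"
    and t: "t \<ge> 0"
  shows "\<bar>s1 t - S0\<bar> \<le> Kc * \<delta> \<and> x1 t \<le> Kc * \<delta> \<and> s2 t \<le> Kc * \<delta> \<and> s3 t \<le> Kc * \<delta> \<and> x2 t \<le> Kc * \<delta>"
proof -
  have n0: "s1 0 \<ge> 0" "x1 0 \<ge> 0" "s2 0 \<ge> 0" "s3 0 \<ge> 0" "x2 0 \<ge> 0" using nn[of 0] by auto
  have "y1 * x1 0 \<le> y1 * \<delta>" using i y1 by (simp add: less_imp_le)
  moreover have "s1 0 - S0 < \<delta>" using i(1) by simp
  ultimately have "s1 0 + y1 * x1 0 - S0 \<le> (1 + y1) * \<delta>" by (simp add: distrib_right)
  moreover have "0 \<le> (1 + y1) * \<delta>" using y1 dl by simp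
  ultimately have u0b: "u0 \<le> (1 + y1) * \<delta>" unfolding u0_def by simp
  have K1d: "\<delta> \<le> K1 * \<delta>" using K1_ge dl by simp
  have "u0 / y1 \<le> (1 + y1) * \<delta> / y1" using u0b y1 by (simp add: divide_right_mono)
  also have "\<dots> = K1 * \<delta>" by (simp add: K1_def)
  finally have Mxb: "Mx \<le> K1 * \<delta>" unfolding Mx_def using i K1d by simp
  have "(1 + y1) * \<delta> \<le> 1 + y1" using dl y1 by (simp add: mult_left_le)
  hence "B0 \<le> Bc" unfolding B0_def Bc_def using u0b mu1_le[of "S0 + u0" "S0 + 1 + y1"] S0
    by (simp add: u0_def)
  note B0b = this
  define P where "P = y1 * k1 * K1 / D * \<delta>"
  define Q where "Q = y1 * K1 * \<delta>"
  define R4 where "R4 = y4 * Bc * K1 / D * \<delta>"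
  define R2 where "R2 = y2 * Bc * K1 / D * \<delta>"
  have nnt: "0 \<le> P" "0 \<le> Q" "0 \<le> R4" "0 \<le> R2" "0 \<le> K1 * \<delta>" "0 \<le> y1 * \<delta>"
    using y1 y2 y4 k1 K1_ge Bc_nn D dl by (auto simp: P_def Q_def R4_def R2_def)
  have Kcd: "Kc * \<delta> = \<delta> + y1 * \<delta> + K1 * \<delta> + P + Q + R4 + R2"
    by (simp add: Kc_def P_def Q_def R4_def R2_def algebra_simps)
  have nt: "s1 t \<ge> 0" "x1 t \<ge> 0" "s2 t \<ge> 0" "s3 t \<ge> 0" "x2 t \<ge> 0" using nn[OF t] by auto
  have bx1: "x1 t \<le> K1 * \<delta>" using x1_bound[OF t] Mxb by simp
  have bs1u: "s1 t - S0 \<le> (1 + y1) * \<delta>" using s1_up[OF t] u0b by simp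
  have "y1 * k1 * Mx \<le> y1 * k1 * (K1 * \<delta>)" using Mxb y1 k1 by (simp add: mult_left_mono)
  hence a1: "y1 * k1 * Mx / D \<le> P" using D by (simp add: P_def divide_right_mono)
  have a2: "S0 - (s1 0 + y1 * x1 0) < \<delta>" using i n0 y1 by (smt (verit) mult_nonneg_nonneg)
  have a3: "y1 * x1 t \<le> Q" using bx1 y1 by (simp add: Q_def mult_left_mono)
  have m: "max (S0 - (s1 0 + y1 * x1 0)) (y1 * k1 * Mx / D) \<le> \<delta> + P"
    using a1 a2 nnt dl by (auto simp: max_def)
  have "S0 - s1 t \<le> \<delta> + P + Q"
    using z_low[OF t] m a3 by linarith
  hence bs1: "\<bar>s1 t - S0\<bar> \<le> Kc * \<delta>" using bs1u Kcd nnt by (simp add: distrib_right)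
  have "B0 * Mx \<le> Bc * (K1 * \<delta>)" using B0b Mxb B0_nn Mx_nn by (intro mult_mono) auto
  hence pb: "y4 * (B0 * Mx) \<le> y4 * (Bc * (K1 * \<delta>))" "y2 * (B0 * Mx) \<le> y2 * (Bc * (K1 * \<delta>))"
    using y4 y2 by (simp_all add: mult_left_mono)
  have "y4 * B0 * Mx / D \<le> R4" using pb(1) D by (simp add: R4_def divide_right_mono mult.assoc)
  hence bs3: "s3 t \<le> Kc * \<delta>" using s3_bound[OF t] i Kcd nnt by simp
  have "y2 * B0 * Mx / D \<le> R2" using pb(2) D by (simp add: R2_def divide_right_mono mult.assoc)
  hence bs2: "s2 t \<le> Kc * \<delta>" using s2_bound[OF t] i Kcd nnt by simp
  have allb: "mu2 (s2 t') (s3 t') \<le> D2" if t': "t' \<ge> 0" for t'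
  proof -
    have "y4 * B0 * Mx / D \<le> R4" using pb(1) D by (simp add: R4_def divide_right_mono mult.assoc)
    hence "s3 t' \<le> Kc * \<delta>" using s3_bound[OF t'] i Kcd nnt by simp
    moreover have "y2 * B0 * Mx / D \<le> R2" using pb(2) D by (simp add: R2_def divide_right_mono mult.assoc)
    hence "s2 t' \<le> Kc * \<delta>" using s2_bound[OF t'] i Kcd nnt by simp
    ultimately show ?thesis using rho[of "s2 t'" "s3 t'"] nn[OF t'] Kr by simp
  qed
  have bx2: "x2 t \<le> Kc * \<delta>" using x2_bound[OF allb t] i Kcd nnt by simp
  have "x1 t \<le> Kc * \<delta>" using bx1 Kcd nnt dl by simp
  thus ?thesis using bs1 bs2 bs3 bx2 by simp
qed

end

lemma (in chemo) sol_traj: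
  assumes sol: "is_solution (chemo_field D S0 D1 D2 y1 y2 y3 y4 mu1 mu2) x"
  shows "traj D S0 k1 k2 D1 D2 y1 y2 y3 y4 mu1 mu2 (\<lambda>t. fst (x t)) (\<lambda>t. fst (snd (x t)))
           (\<lambda>t. fst (snd (snd (x t)))) (\<lambda>t. fst (snd (snd (snd (x t))))) (\<lambda>t. snd (snd (snd (snd (x t)))))"
proof -
  have main: "((\<lambda>t. fst (x t)) has_real_derivative ((S0 - fst (x t)) * D - y1 * mu1 (fst (x t)) * fst (snd (x t)))) (at t within {0..}) \<and>
      ((\<lambda>t. fst (snd (x t))) has_real_derivative (- D1 * fst (snd (x t)) + mu1 (fst (x t)) * fst (snd (x t)))) (at t within {0..}) \<and>
      ((\<lambda>t. fst (snd (snd (x t)))) has_real_derivative (- D * fst (snd (snd (x t))) + y2 * mu1 (fst (x t)) * fst (snd (x t)) - y3 * mu2 (fst (snd (snd (x t)))) (fst (snd (snd (snd (x t))))) * snd (snd (snd (snd (x t)))))) (at t within {0..}) \<and>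
      ((\<lambda>t. fst (snd (snd (snd (x t))))) has_real_derivative (- D * fst (snd (snd (snd (x t)))) + y4 * mu1 (fst (x t)) * fst (snd (x t)))) (at t within {0..}) \<and>
      ((\<lambda>t. snd (snd (snd (snd (x t))))) has_real_derivative (- D2 * snd (snd (snd (snd (x t)))) + mu2 (fst (snd (snd (x t)))) (fst (snd (snd (snd (x t))))) * snd (snd (snd (snd (x t)))))) (at t within {0..}) \<and>
      fst (x t) \<ge> 0 \<and> fst (snd (x t)) \<ge> 0 \<and> fst (snd (snd (x t))) \<ge> 0 \<and> fst (snd (snd (snd (x t)))) \<ge> 0 \<and> snd (snd (snd (snd (x t)))) \<ge> 0"
    if t: "t \<ge> 0" for t
  proof -
    obtain a b c d e where xt: "x t = (a, b, c, d, e)" by (metis prod.collapse)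
    have v: "(x has_vector_derivative ((S0 - a) * D - y1 * mu1 a * b, - D1 * b + mu1 a * b,
        - D * c + y2 * mu1 a * b - y3 * mu2 c d * e, - D * d + y4 * mu1 a * b, - D2 * e + mu2 c d * e)) (at t within {0..})"
      using sol t xt unfolding is_solution_def by (auto simp: chemo_field_def)
    have o: "x t \<in> orthant" using sol t unfolding is_solution_def by auto
    have 1: "((\<lambda>t. fst (x t)) has_vector_derivative ((S0 - a) * D - y1 * mu1 a * b)) (at t within {0..})"
      using vd_fst[OF v] by simp
    have 2: "((\<lambda>t. fst (snd (x t))) has_vector_derivative (- D1 * b + mu1 a * b)) (at t within {0..})"
      using vd_fst[OF vd_snd[OF v]] by simp
    have 3: "((\<lambda>t. fst (snd (snd (x t)))) has_vector_derivative (- D * c + y2 * mu1 a * b - y3 * mu2 c d * e)) (at t within {0..})"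
      using vd_fst[OF vd_snd[OF vd_snd[OF v]]] by simp
    have 4: "((\<lambda>t. fst (snd (snd (snd (x t))))) has_vector_derivative (- D * d + y4 * mu1 a * b)) (at t within {0..})"
      using vd_fst[OF vd_snd[OF vd_snd[OF vd_snd[OF v]]]] by simp
    have 5: "((\<lambda>t. snd (snd (snd (snd (x t))))) has_vector_derivative (- D2 * e + mu2 c d * e)) (at t within {0..})"
      using vd_snd[OF vd_snd[OF vd_snd[OF vd_snd[OF v]]]] by simp
    show ?thesis using 1 2 3 4 5 o xt
      by (simp add: has_real_derivative_iff_has_vector_derivative orthant_def)
  qed
  show ?thesis
    by (intro traj.intro chemo_axioms traj_axioms.intro) (use main in simp_all)
qed

lemma dist_pair_le: "dist (a, b) (c, d) \<le> dist a c + dist b d"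
  unfolding dist_Pair_Pair using sqrt_sum_squares_le_sum_abs[of "dist a c" "dist b d"] by simp

lemma dist_pair_ge1: "dist a c \<le> dist (a, b) (c, d)"
  unfolding dist_Pair_Pair by simp

lemma dist_pair_ge2: "dist b d \<le> dist (a, b) (c, d)"
  unfolding dist_Pair_Pair by simp

lemma dist_fst_le': "dist (fst p) (fst q) \<le> dist p q"
  by (cases p, cases q) (simp add: dist_pair_ge1)

lemma dist_snd_le': "dist (snd p) (snd q) \<le> dist p q"
  by (cases p, cases q) (simp add: dist_pair_ge2)

theorem proposition2p2:
  fixes D S0 k1 k2 D1 D2 y1 y2 y3 y4 :: real
    and mu1 mu1' :: "real \<Rightarrow> real"
    and mu2 d2mu2 d3mu2 :: "real \<Rightarrow> real \<Rightarrow> real"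
    and \<Gamma> :: "real \<Rightarrow> real"
  assumes "D > 0" and "S0 > 0" and "k1 \<ge> 0" and "k2 \<ge> 0"
    and "D1 = D + k1" and "D2 = D + k2"
    and "y1 > 0" and "y2 > 0" and "y3 > 0" and "y4 > 0"
    \<comment> \<open>(H1)\<close>
    and H1a: "\<And>s. s \<ge> 0 \<Longrightarrow> (mu1 has_real_derivative mu1' s) (at s within {0..})"
    and H1b: "continuous_on {0..} mu1'"
    and H1c: "\<And>s. s > 0 \<Longrightarrow> mu1' s > 0"
    \<comment> \<open>(H2)\<close>
    and H2a: "mu1 0 = 0"
    and H2b: "\<And>s. s > 0 \<Longrightarrow> mu1 s > 0"
    \<comment> \<open>(H3): C1 on the closed quadrant, with partial derivatives d2mu2, d3mu2\<close>
    and H3a: "\<And>s2 s3. s2 \<ge> 0 \<Longrightarrow> s3 \<ge> 0 \<Longrightarrow>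
                ((\<lambda>p. mu2 (fst p) (snd p)) has_derivative
                   (\<lambda>h. d2mu2 s2 s3 * fst h + d3mu2 s2 s3 * snd h))
                (at (s2, s3) within {0..} \<times> {0..})"
    and H3b: "continuous_on ({0..} \<times> {0..}) (\<lambda>p. d2mu2 (fst p) (snd p))"
    and H3c: "continuous_on ({0..} \<times> {0..}) (\<lambda>p. d3mu2 (fst p) (snd p))"
    and H3d: "\<And>s2 s3. s2 > 0 \<Longrightarrow> s3 > 0 \<Longrightarrow> mu2 s2 s3 > 0"
    \<comment> \<open>(H4), (H5)\<close>
    and H4: "\<And>s2. s2 \<ge> 0 \<Longrightarrow> ((\<lambda>s3. mu2 s2 s3) \<longlongrightarrow> 0) at_top"
    and H5: "\<And>s3. s3 \<ge> 0 \<Longrightarrow> ((\<lambda>s2. mu2 s2 s3) \<longlongrightarrow> 0) at_top"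
    \<comment> \<open>(H6)\<close>
    and H6a: "\<And>s3. s3 \<ge> 0 \<Longrightarrow> mu2 0 s3 = 0"
    and H6b: "\<And>s2. s2 > 0 \<Longrightarrow> mu2 s2 0 \<ge> 0"
    \<comment> \<open>(H7)\<close>
    and H7a: "continuous_on {0..} \<Gamma>"
    and H7b: "\<And>s2 s3. s2 \<ge> 0 \<Longrightarrow> s3 \<ge> 0 \<Longrightarrow> s2 < \<Gamma> s3 \<Longrightarrow> d2mu2 s2 s3 > 0"
    and H7c: "\<And>s2 s3. s2 \<ge> 0 \<Longrightarrow> s3 \<ge> 0 \<Longrightarrow> s2 > \<Gamma> s3 \<Longrightarrow> d2mu2 s2 s3 < 0"
    \<comment> \<open>hypothesis of the proposition\<close>
    and "break_even mu1 D1 \<ge> ereal S0"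
  shows "globally_asymptotically_stable
           (chemo_field D S0 D1 D2 y1 y2 y3 y4 mu1 mu2) (S0, 0, 0, 0, 0)"
proof -
  note A = assms
  have D1p: "D1 > 0" using A(1,3,5) by simp
  have D2p: "D2 > 0" using A(1,4,6) by simp
  have mono1: "mu1 a < mu1 b" if ab: "0 \<le> a" "a < b" for a b
  proof -
    obtain \<xi> where "a < \<xi>" "\<xi> < b" "mu1 b - mu1 a = (b - a) * mu1' \<xi>"
      using mvt_within[of 0 mu1 mu1' a b] H1a ab by auto
    moreover have "mu1' \<xi> > 0" using H1c \<open>a < \<xi>\<close> ab by simp
    ultimately show ?thesis using ab by (smt (verit) mult_pos_pos)
  qed
  have mu1_le: "mu1 a \<le> mu1 b" if "0 \<le> a" "a \<le> b" for a b
    using mono1[of a b] that by (cases "a = b") auto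
  have cont1: "continuous_on {0..S0} mu1"
  proof -
    have "continuous_on {0..} mu1"
      using H1a by (meson DERIV_continuous atLeast_iff continuous_on_eq_continuous_within)
    thus ?thesis by (rule continuous_on_subset) auto
  qed
  have muS0: "mu1 S0 \<le> D1"
  proof (cases "\<exists>s>0. mu1 s = D1")
    case True
    then obtain s where s: "s > 0" "mu1 s = D1" by auto
    have "(THE s. s > 0 \<and> mu1 s = D1) = s"
    proof (rule the_equality)
      show "s > 0 \<and> mu1 s = D1" using s by simp
    next
      fix s' assume s': "s' > 0 \<and> mu1 s' = D1"
      show "s' = s"
      proof (rule ccontr)
        assume "s' \<noteq> s"
        hence "s' < s \<or> s < s'" by auto
        thus False using mono1[of s' s] mono1[of s s'] s s' by auto
      qed
    qed
    hence "break_even mu1 D1 = ereal s" unfolding break_even_def using True by simp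
    hence "S0 \<le> s" using A(27) by simp
    thus ?thesis using mu1_le[of S0 s] A(2) s by simp
  next
    case False
    show ?thesis
    proof (rule ccontr)
      assume "\<not> mu1 S0 \<le> D1"
      hence "mu1 0 \<le> D1" "D1 \<le> mu1 S0" using H2a D1p by auto
      then obtain s where "0 \<le> s" "s \<le> S0" "mu1 s = D1"
        using IVT'[of mu1 0 D1 S0] cont1 A(2) by auto
      moreover have "s \<noteq> 0" using \<open>mu1 s = D1\<close> H2a D1p by auto
      ultimately show False using False by auto
    qed
  qed
  have mu2nn: "0 \<le> mu2 a b" if "0 \<le> a" "0 \<le> b" for a b
  proof (cases "a = 0")
    case True thus ?thesis using H6a that by simp
  next
    case False
    hence a: "a > 0" using that by simp
    show ?thesis
    proof (cases "b = 0")
      case True thus ?thesis using H6b a by simp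
    next
      case False thus ?thesis using H3d[of a b] a that by simp
    qed
  qed
  have mu2small: "\<exists>\<rho>>0. \<forall>a b. 0 \<le> a \<longrightarrow> a \<le> \<rho> \<longrightarrow> 0 \<le> b \<longrightarrow> b \<le> \<rho> \<longrightarrow> mu2 a b < e" if e: "e > 0" for e
  proof -
    have "continuous (at (0, 0) within {0..} \<times> {0..}) (\<lambda>p. mu2 (fst p) (snd p))"
      using has_derivative_continuous[OF H3a[of 0 0]] by simp
    then obtain d where d: "d > 0" "\<And>p. p \<in> {0..} \<times> {0..} \<Longrightarrow> dist p (0, 0) < d \<Longrightarrow>
        dist (mu2 (fst p) (snd p)) (mu2 0 0) < e"
      unfolding continuous_within_eps_delta using e by fastforce
    have "\<forall>a b. 0 \<le> a \<longrightarrow> a \<le> d / 3 \<longrightarrow> 0 \<le> b \<longrightarrow> b \<le> d / 3 \<longrightarrow> mu2 a b < e"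
    proof (intro allI impI)
      fix a b :: real assume ab: "0 \<le> a" "a \<le> d / 3" "0 \<le> b" "b \<le> d / 3"
      have "dist (a, b) (0, 0) \<le> dist a 0 + dist b 0" by (rule dist_pair_le)
      also have "\<dots> < d" using ab d by (simp add: dist_real_def)
      finally have "dist (mu2 a b) (mu2 0 0) < e" using d(2)[of "(a, b)"] ab by simp
      thus "mu2 a b < e" using H6a[of 0] by (simp add: dist_real_def)
    qed
    thus ?thesis using d by (intro exI[of _ "d / 3"]) auto
  qed
  interpret chemo D S0 k1 k2 D1 D2 y1 y2 y3 y4 mu1 mu2
    by unfold_locales (use A mono1 H2a muS0 mu2nn mu2small in auto)
  let ?F = "chemo_field D S0 D1 D2 y1 y2 y3 y4 mu1 mu2"
  let ?e = "(S0, 0::real, 0::real, 0::real, 0::real)"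
  have xdecomp: "x t = (fst (x t), fst (snd (x t)), fst (snd (snd (x t))), fst (snd (snd (snd (x t)))), snd (snd (snd (snd (x t)))))"
    for x :: "real \<Rightarrow> state" and t by simp
  have e_orth: "?e \<in> orthant" using A(2) by (simp add: orthant_def)
  have Fe: "?F ?e = 0" by (simp add: chemo_field_def zero_prod_def)
  have stab: "\<exists>\<delta>>0. \<forall>x. is_solution ?F x \<and> dist (x 0) ?e < \<delta> \<longrightarrow> (\<forall>t\<ge>0. dist (x t) ?e < \<epsilon>)"
    if eps: "\<epsilon> > 0" for \<epsilon>
  proof -
    obtain \<rho> where \<rho>: "\<rho> > 0" "\<And>a b. 0 \<le> a \<Longrightarrow> a \<le> \<rho> \<Longrightarrow> 0 \<le> b \<Longrightarrow> b \<le> \<rho> \<Longrightarrow> mu2 a b < D2"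
      using mu2small[OF D2p] by auto
    define \<delta> where "\<delta> = min 1 (min (\<epsilon> / (6 * Kc)) (\<rho> / Kc))"
    have Kp: "Kc > 0" using Kc_pos by simp
    have dp: "\<delta> > 0" using eps \<rho> Kp by (simp add: \<delta>_def)
    have d1: "\<delta> \<le> 1" by (simp add: \<delta>_def)
    have "\<delta> \<le> \<epsilon> / (6 * Kc)" by (simp add: \<delta>_def)
    hence dE: "Kc * \<delta> \<le> \<epsilon> / 6" using Kp by (simp add: field_simps)
    have "\<delta> \<le> \<rho> / Kc" by (simp add: \<delta>_def)
    hence dR: "Kc * \<delta> \<le> \<rho>" using Kp by (simp add: field_simps)
    have "\<forall>t\<ge>0. dist (x t) ?e < \<epsilon>" if x: "is_solution ?F x" "dist (x 0) ?e < \<delta>" for x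
    proof (intro allI impI)
      fix t :: real assume t: "t \<ge> 0"
      interpret T: traj D S0 k1 k2 D1 D2 y1 y2 y3 y4 mu1 mu2 "\<lambda>t. fst (x t)" "\<lambda>t. fst (snd (x t))"
           "\<lambda>t. fst (snd (snd (x t)))" "\<lambda>t. fst (snd (snd (snd (x t))))" "\<lambda>t. snd (snd (snd (snd (x t))))"
        by (rule sol_traj[OF x(1)])
      have x0: "x 0 = (fst (x 0), fst (snd (x 0)), fst (snd (snd (x 0))), fst (snd (snd (snd (x 0)))), snd (snd (snd (snd (x 0)))))"
        by simp
      have i1: "dist (fst (x 0)) S0 < \<delta>"
        using dist_fst_le'[of "x 0" ?e] x(2) by simp
      have r1: "dist (snd (x 0)) (0::real, 0::real, 0::real, 0::real) < \<delta>"
        using dist_snd_le'[of "x 0" ?e] x(2) by simp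
      have i2: "dist (fst (snd (x 0))) 0 < \<delta>"
        using dist_fst_le'[of "snd (x 0)" "(0::real, 0::real, 0::real, 0::real)"] r1 by simp
      have r2: "dist (snd (snd (x 0))) (0::real, 0::real, 0::real) < \<delta>"
        using dist_snd_le'[of "snd (x 0)" "(0::real, 0::real, 0::real, 0::real)"] r1 by simp
      have i3: "dist (fst (snd (snd (x 0)))) 0 < \<delta>"
        using dist_fst_le'[of "snd (snd (x 0))" "(0::real, 0::real, 0::real)"] r2 by simp
      have r3: "dist (snd (snd (snd (x 0)))) (0::real, 0::real) < \<delta>"
        using dist_snd_le'[of "snd (snd (x 0))" "(0::real, 0::real, 0::real)"] r2 by simp
      have i4: "dist (fst (snd (snd (snd (x 0))))) 0 < \<delta>"
        using dist_fst_le'[of "snd (snd (snd (x 0)))" "(0::real, 0::real)"] r3 by simp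
      have i5: "dist (snd (snd (snd (snd (x 0))))) 0 < \<delta>"
        using dist_snd_le'[of "snd (snd (snd (x 0)))" "(0::real, 0::real)"] r3 by simp
      have B: "\<bar>fst (x t) - S0\<bar> \<le> Kc * \<delta> \<and> fst (snd (x t)) \<le> Kc * \<delta> \<and> fst (snd (snd (x t))) \<le> Kc * \<delta> \<and>
               fst (snd (snd (snd (x t)))) \<le> Kc * \<delta> \<and> snd (snd (snd (snd (x t)))) \<le> Kc * \<delta>"
        using T.stable_traj[OF dp d1 _ _ _ _ _ \<rho>(2) dR t] i1 i2 i3 i4 i5 by (auto simp: dist_real_def)
      have N: "fst (x t) \<ge> 0 \<and> fst (snd (x t)) \<ge> 0 \<and> fst (snd (snd (x t))) \<ge> 0 \<and> fst (snd (snd (snd (x t)))) \<ge> 0 \<and> snd (snd (snd (snd (x t)))) \<ge> 0"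
        using T.nn[OF t] by simp
      have "dist (x t) ?e \<le> dist (fst (x t)) S0 + (dist (fst (snd (x t))) 0 + (dist (fst (snd (snd (x t)))) 0 +
              (dist (fst (snd (snd (snd (x t))))) 0 + dist (snd (snd (snd (snd (x t))))) 0)))"
      proof -
        have "dist (x t) ?e \<le> dist (fst (x t)) S0 + dist (snd (x t)) (0::real, 0::real, 0::real, 0::real)"
          using dist_pair_le[of "fst (x t)" "snd (x t)" S0 "(0::real, 0::real, 0::real, 0::real)"] by simp
        also have "dist (snd (x t)) (0::real, 0::real, 0::real, 0::real) \<le> dist (fst (snd (x t))) 0 + dist (snd (snd (x t))) (0::real, 0::real, 0::real)"
          using dist_pair_le[of "fst (snd (x t))" "snd (snd (x t))" 0 "(0::real, 0::real, 0::real)"] by simp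
        also have "dist (snd (snd (x t))) (0::real, 0::real, 0::real) \<le> dist (fst (snd (snd (x t)))) 0 + dist (snd (snd (snd (x t)))) (0::real, 0::real)"
          using dist_pair_le[of "fst (snd (snd (x t)))" "snd (snd (snd (x t)))" 0 "(0::real, 0::real)"] by simp
        also have "dist (snd (snd (snd (x t)))) (0::real, 0::real) \<le> dist (fst (snd (snd (snd (x t))))) 0 + dist (snd (snd (snd (snd (x t))))) 0"
          using dist_pair_le[of "fst (snd (snd (snd (x t))))" "snd (snd (snd (snd (x t))))" 0 0] by simp
        finally show ?thesis by simp
      qed
      also have "\<dots> \<le> 5 * (Kc * \<delta>)" using B N by (simp add: dist_real_def)
      also have "\<dots> < \<epsilon>" using dE eps by simp
      finally show "dist (x t) ?e < \<epsilon>" .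
    qed
    thus ?thesis using dp by blast
  qed
  have attr: "(x \<longlongrightarrow> ?e) at_top" if x: "is_solution ?F x" for x
  proof -
    interpret T: traj D S0 k1 k2 D1 D2 y1 y2 y3 y4 mu1 mu2 "\<lambda>t. fst (x t)" "\<lambda>t. fst (snd (x t))"
         "\<lambda>t. fst (snd (snd (x t)))" "\<lambda>t. fst (snd (snd (snd (x t))))" "\<lambda>t. snd (snd (snd (snd (x t))))"
      by (rule sol_traj[OF x])
    show ?thesis using T.converges by simp
  qed
  show ?thesis unfolding globally_asymptotically_stable_def
    using e_orth Fe stab attr by blast
qed

end
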